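(* There is an absolute constant $C>0$ such that for every odd $n\ge3$ and every $\epsilon\in(0,1)$, the mixing time of the Hadamard-coined quantum walk on the $n$-cycle satisfies \[M_\epsilon\le C\,\frac{n(1+\log n)}{\epsilon^3}.\]
   Context: Hadamard-coined quantum walk on the $n$-cycle: $\mathcal H=\mathbb C^2\otimes\mathbb C^n$ with basis $|a,i\rangle$, $a\in\{R,L\}$, $i\in\mathbb Z_n$; $U=S\cdot(H\otimes I)$ with $H=\frac1{\sqrt2}\begin{pmatrix}1&1\\1&-1\end{pmatrix}$, $S|R,i\rangle=|R,i+1\bmod n\rangle$, $S|L,i\rangle=|L,i-1\bmod n\rangle$. $P_t(\cdot|a,i)$ is the distribution on $\mathbb Z_n$ of the vertex of $U^t|a,i\rangle$, $\bar P_T=\frac1T\sum_{t=0}^{T-1}P_t$, $\pi(\cdot|a,i)=\lim_T\bar P_T(\cdot|a,i)$ (which is uniform). Total variation $\|d_1-d_2\|=\sum_j|d_1(j)-d_2(j)|$. Mixing time $M_\epsilon=\min\{T\ge1:\forall t\ge T,\forall$ basis states $|a,i\rangle:\ \|\pi(\cdot|a,i)-\bar P_t(\cdot|a,i)\|\le\epsilon\}$. *)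

theory Defs
  imports "HOL-Analysis.Analysis"
begin

text \<open>Hadamard walk on the n-cycle. A state is a function
  bool => nat => complex, where True encodes coin state R and False encodes L,
  and vertices are 0..n-1 (indices outside are irrelevant).\<close>

type_synonym qstate = "bool \<Rightarrow> nat \<Rightarrow> complex"

text \<open>U = S (H \<otimes> I).  H|R> = (|R>+|L>)/sqrt 2, H|L> = (|R>-|L>)/sqrt 2;
  S|R,i> = |R,i+1 mod n>, S|L,i> = |L,i-1 mod n>.\<close>

definition walk_step :: "nat \<Rightarrow> qstate \<Rightarrow> qstate" where
  "walk_step n psi = (\<lambda>a j.
     if a then (psi True ((j + n - 1) mod n) + psi False ((j + n - 1) mod n)) / complex_of_real (sqrt 2)
     else (psi True ((j + 1) mod n) - psi False ((j + 1) mod n)) / complex_of_real (sqrt 2))"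

definition basis_state :: "bool \<Rightarrow> nat \<Rightarrow> qstate" where
  "basis_state a i = (\<lambda>b j. if b = a \<and> j = i then 1 else 0)"

definition walk_state :: "nat \<Rightarrow> bool \<Rightarrow> nat \<Rightarrow> nat \<Rightarrow> qstate" where
  "walk_state n a i t = (walk_step n ^^ t) (basis_state a i)"

definition walk_prob :: "nat \<Rightarrow> bool \<Rightarrow> nat \<Rightarrow> nat \<Rightarrow> nat \<Rightarrow> real" where
  "walk_prob n a i t j = (cmod (walk_state n a i t True j))\<^sup>2 + (cmod (walk_state n a i t False j))\<^sup>2"

definition avg_prob :: "nat \<Rightarrow> bool \<Rightarrow> nat \<Rightarrow> nat \<Rightarrow> nat \<Rightarrow> real" where
  "avg_prob n a i T j = (\<Sum>t<T. walk_prob n a i t j) / real T"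

definition lim_dist :: "nat \<Rightarrow> bool \<Rightarrow> nat \<Rightarrow> nat \<Rightarrow> real" where
  "lim_dist n a i j = lim (\<lambda>T. avg_prob n a i T j)"

text \<open>total variation (without the factor 1/2): sum_j |d1 j - d2 j|\<close>
definition tv_dist :: "nat \<Rightarrow> (nat \<Rightarrow> real) \<Rightarrow> (nat \<Rightarrow> real) \<Rightarrow> real" where
  "tv_dist n d1 d2 = (\<Sum>j<n. \<bar>d1 j - d2 j\<bar>)"

definition mixes :: "nat \<Rightarrow> real \<Rightarrow> nat \<Rightarrow> bool" where
  "mixes n \<epsilon> T \<longleftrightarrow> (\<forall>t\<ge>T. \<forall>a. \<forall>i<n.
      tv_dist n (lim_dist n a i) (avg_prob n a i t) \<le> \<epsilon>)"

definition mixing_time :: "nat \<Rightarrow> real \<Rightarrow> nat" where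
  "mixing_time n \<epsilon> = (LEAST T. T \<ge> 1 \<and> mixes n \<epsilon> T)"

end

theory Submission
  imports Defs
begin

lemma sin_lb0: fixes x :: real assumes "0 \<le> x" "x \<le> 2" shows "x / 3 \<le> sin x"
proof -
  have "\<bar>sin x - (\<Sum>m<3. sin_coeff m * x ^ m)\<bar> \<le> inverse (fact 3) * \<bar>x\<bar> ^ 3"
    by (rule Maclaurin_sin_bound)
  moreover have "(\<Sum>m<3. sin_coeff m * x ^ m) = x"
    by (simp add: eval_nat_numeral sin_coeff_def)
  moreover have "inverse (fact 3) * \<bar>x\<bar> ^ 3 = x^3/6"
  proof -
    have "(fact 3::real) = 6" by (simp add: fact_numeral)
    then show ?thesis using assms by (simp add: field_simps)
  qed
  ultimately have "\<bar>sin x - x\<bar> \<le> x^3/6" by simp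
  then have "x - x^3/6 \<le> sin x" using abs_le_iff[of "sin x - x"] by linarith
  moreover have "x^3/6 \<le> 2 * x / 3"
  proof -
    have "x*x \<le> 2*2" by (rule mult_mono) (use assms in auto)
    then have "x^2 \<le> 4" by (simp add: power2_eq_square)
    then have "x^2 * x \<le> 4 * x" using assms by (simp add: mult_right_mono)
    then show ?thesis by (simp add: power3_eq_cube power2_eq_square)
  qed
  ultimately show ?thesis by linarith
qed

lemma abs_sin_shift: "\<bar>sin (x + real_of_int l * pi)\<bar> = \<bar>sin x\<bar>"
proof -
  have s: "sin (real_of_int l * pi) = 0" by (simp add: sin_zero_iff_int2)
  then have c: "\<bar>cos (real_of_int l * pi)\<bar> = 1"
    using sin_cos_squared_add[of "real_of_int l * pi"] by (auto simp add: power2_eq_1_iff)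
  show ?thesis by (simp add: sin_add s abs_mult c)
qed

lemma sin_lb: assumes "\<bar>y - real_of_int l * pi\<bar> \<le> 2" shows "\<bar>y - real_of_int l * pi\<bar> / 3 \<le> \<bar>sin y\<bar>"
proof -
  define x where "x = y - real_of_int l * pi"
  have "\<bar>x\<bar> / 3 \<le> \<bar>sin x\<bar>"
  proof (cases "x \<ge> 0")
    case True then show ?thesis using sin_lb0[of x] assms x_def by auto
  next
    case False
    have "sin (-x) = - sin x" by simp
    then show ?thesis using sin_lb0[of "-x"] assms False by (simp add: x_def)
  qed
  moreover have "\<bar>sin y\<bar> = \<bar>sin x\<bar>" using abs_sin_shift[of x l] by (simp add: x_def)
  ultimately show ?thesis by (simp add: x_def)
qed


locale hw =
  fixes n :: nat
  assumes n3: "3 \<le> n" and nodd: "odd n"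
begin

lemma npos: "0 < n" using n3 by simp

definition om :: "int \<Rightarrow> complex" where
  "om x = cis (2 * pi * real_of_int x / real n)"

lemma om_add: "om (x + y) = om x * om y"
  by (simp add: om_def cis_mult add_divide_distrib distrib_left)

lemma om_0[simp]: "om 0 = 1" by (simp add: om_def)

lemma norm_om[simp]: "norm (om x) = 1" by (simp add: om_def)

lemma om_neg: "om (- x) = cnj (om x)"
  by (simp add: om_def cis_cnj)

lemma om_n_mult: "om (int n * m) = 1"
proof -
  have "2 * pi * real_of_int (int n * m) / real n = 2 * pi * real_of_int m"
    using npos by (simp add: field_simps)
  then show ?thesis by (simp add: om_def)
qed

lemma om_mod: "om (x mod int n) = om x"
proof -
  have "x = x mod int n + int n * (x div int n)" by simp
  then have "om x = om (x mod int n) * om (int n * (x div int n))"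
    by (metis om_add)
  then show ?thesis by (simp add: om_n_mult)
qed

lemma om_cong: "x mod int n = y mod int n \<Longrightarrow> om x = om y"
  by (metis om_mod)

lemma om_eq_1_iff: "om m = 1 \<longleftrightarrow> int n dvd m"
proof
  assume "int n dvd m"
  then obtain l where "m = int n * l" by (auto simp: dvd_def)
  then show "om m = 1" by (simp add: om_n_mult)
next
  assume "om m = 1"
  then have "cos (2 * pi * real_of_int m / real n) = 1"
    unfolding om_def by (metis Re_complex_of_real cis.sel(1) of_real_1)
  then obtain l :: int where l: "2 * pi * real_of_int m / real n = l * 2 * pi"
    by (auto simp: cos_one_2pi_int)
  then have "real_of_int m = real_of_int l * real n" using npos by (simp add: field_simps)
  then have "m = l * int n" by (metis of_int_eq_iff of_int_mult of_int_of_nat_eq)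
  then show "int n dvd m" by simp
qed

lemma om_pow: "om (m * int k) = om m ^ k"
  by (induction k) (simp_all add: distrib_left om_add)

lemma om_sum: "(\<Sum>k<n. om (m * int k)) = (if int n dvd m then of_nat n else 0)"
proof (cases "int n dvd m")
  case True
  then have "\<And>k. om (m * int k) = 1"
    by (metis dvd_mult2 om_eq_1_iff)
  then show ?thesis using True by simp
next
  case False
  then have ne: "om m \<noteq> 1" by (simp add: om_eq_1_iff)
  have "om m ^ n = 1" by (metis om_pow om_n_mult mult.commute)
  then show ?thesis using False ne
    by (simp add: om_pow sum_gp_strict)
qed

end

lemma eig_abs:
  fixes A B l m :: complex and e p :: "bool \<Rightarrow> complex"
  assumes lm1: "l + m = A - B" and lm2: "l * m = - 2 * A * B" and ne: "l \<noteq> m"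
  and p: "\<And>b. p b = ((if b then A*(e True + e False) else B*(e True - e False)) - m * e b)/(l - m)"
  shows "(if b then A*(p True + p False) else B*(p True - p False)) = l * p b"
proof -
  have m: "m = A - B - l" using lm1 by (simp add: algebra_simps)
  have q: "l * (A - B - l) = - 2 * A * B" using lm2 m by simp
  have ne': "l - m \<noteq> 0" using ne by simp
  show ?thesis
  proof (cases b)
    case True
    have "A * ((A * (e True + e False) - m * e True) + (B * (e True - e False) - m * e False))
        = l * (A * (e True + e False) - m * e True)"
      unfolding m using q by algebra
    then show ?thesis using True ne' by (simp add: p add_divide_distrib[symmetric] diff_divide_distrib[symmetric])
  next
    case False
    have "B * ((A * (e True + e False) - m * e True) - (B * (e True - e False) - m * e False))
        = l * (B * (e True - e False) - m * e False)"
      unfolding m using q by algebra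
    then show ?thesis using False ne' by (simp add: p add_divide_distrib[symmetric] diff_divide_distrib[symmetric])
  qed
qed

context hw begin

definition sk :: "nat \<Rightarrow> real" where "sk k = sin (2 * pi * real k / real n)"
definition rho :: "nat \<Rightarrow> real" where "rho k = sqrt (1 - (sk k)^2 / 2)"
definition lam :: "nat \<Rightarrow> bool \<Rightarrow> complex" where
  "lam k s = Complex (if s then rho k else - rho k) (- sk k / sqrt 2)"
definition Ak :: "nat \<Rightarrow> complex" where "Ak k = om (- int k) / complex_of_real (sqrt 2)"
definition Bk :: "nat \<Rightarrow> complex" where "Bk k = om (int k) / complex_of_real (sqrt 2)"
definition Uk :: "nat \<Rightarrow> (bool \<Rightarrow> complex) \<Rightarrow> bool \<Rightarrow> complex" where
  "Uk k v b = (if b then Ak k * (v True + v False) else Bk k * (v True - v False))"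
definition ev :: "bool \<Rightarrow> bool \<Rightarrow> complex" where "ev a b = (if b = a then 1 else 0)"
definition Pv :: "bool \<Rightarrow> nat \<Rightarrow> bool \<Rightarrow> bool \<Rightarrow> complex" where
  "Pv a k s b = (Uk k (ev a) b - lam k (\<not> s) * ev a b) / (lam k s - lam k (\<not> s))"
definition V :: "bool \<Rightarrow> nat \<Rightarrow> nat \<Rightarrow> bool \<Rightarrow> complex" where
  "V a k t b = lam k True ^ t * Pv a k True b + lam k False ^ t * Pv a k False b"

lemma sk_sq: "(sk k)^2 \<le> 1"
  unfolding sk_def by (metis sin_cos_squared_add le_add_same_cancel1 zero_le_power2)

lemma rho_sq: "(rho k)^2 = 1 - (sk k)^2 / 2"
  using sk_sq[of k] by (simp add: rho_def)

lemma rho_ge: "1 / sqrt 2 \<le> rho k"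
proof -
  have "1/2 \<le> 1 - (sk k)^2 / 2" using sk_sq by simp
  then have "sqrt (1/2) \<le> rho k" unfolding rho_def by (rule real_sqrt_le_mono)
  then show ?thesis by (simp add: real_sqrt_divide)
qed

lemma rho_pos: "0 < rho k"
  using rho_ge[of k] by (smt (verit) divide_pos_pos real_sqrt_gt_zero)

lemma lam_sum: "lam k True + lam k False = Ak k - Bk k"
  by (simp add: complex_eq_iff lam_def Ak_def Bk_def om_def sk_def Re_divide_of_real Im_divide_of_real)

lemma lam_prod: "lam k True * lam k False = - 2 * Ak k * Bk k"
proof -
  have "om (- int k) * om (int k) = 1" by (metis om_add om_0 add.left_inverse)
  moreover have "complex_of_real (sqrt 2) * complex_of_real (sqrt 2) = 2"
    by (metis of_real_mult real_sqrt_mult_self of_real_numeral abs_numeral)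
  ultimately have r: "- 2 * Ak k * Bk k = -1" by (simp add: Ak_def Bk_def field_simps)
  have "(rho k)^2 + (- sk k / sqrt 2)^2 = 1" using rho_sq by (simp add: power_divide)
  then have "lam k True * lam k False = -1"
    by (simp add: complex_eq_iff lam_def power2_eq_square algebra_simps)
  then show ?thesis using r by simp
qed

lemma lam_ne: "lam k True \<noteq> lam k False"
  using rho_pos[of k] by (simp add: lam_def)

lemma Uk_PvT: "Uk k (Pv a k True) b = lam k True * Pv a k True b"
  unfolding Uk_def
  by (rule eig_abs[OF lam_sum[of k] lam_prod[of k] lam_ne[of k], where e="ev a"])
     (simp add: Pv_def Uk_def)

lemma Uk_PvF: "Uk k (Pv a k False) b = lam k False * Pv a k False b"
proof -
  have 1: "lam k False + lam k True = Ak k - Bk k" using lam_sum[of k] by (simp add: add.commute)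
  have 2: "lam k False * lam k True = - 2 * Ak k * Bk k" using lam_prod[of k] by (simp add: mult.commute)
  have 3: "lam k False \<noteq> lam k True" using lam_ne[of k] by simp
  show ?thesis unfolding Uk_def
    by (rule eig_abs[OF 1 2 3, where e="ev a"])
       (simp add: Pv_def Uk_def)
qed

lemma Uk_Pv: "Uk k (Pv a k s) b = lam k s * Pv a k s b"
  by (cases s) (simp_all add: Uk_PvT Uk_PvF)

lemma sum2_id: fixes l m x e :: complex assumes "l \<noteq> m"
  shows "(x - m*e)/(l-m) + (x - l*e)/(m - l) = e"
proof -
  have 1: "l - m \<noteq> 0" using assms by simp
  have "(x - l*e)/(m - l) = - ((x - l*e)/(l - m))"
    by (metis minus_diff_eq divide_minus_right)
  then have "(x - m*e)/(l-m) + (x - l*e)/(m - l) = ((x - m*e) - (x - l*e))/(l-m)"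
    by (simp add: diff_divide_distrib)
  also have "... = e" using 1 by (simp add: field_simps)
  finally show ?thesis .
qed

lemma V_0: "V a k 0 b = ev a b"
  unfolding V_def Pv_def using sum2_id[OF lam_ne[of k], of "Uk k (ev a) b" "ev a b"] by simp

lemma Uk_lin: "Uk k (\<lambda>b. c1 * f b + c2 * g b) b = c1 * Uk k f b + c2 * Uk k g b"
  by (simp add: Uk_def algebra_simps)

lemma V_Suc: "V a k (Suc t) b = Uk k (V a k t) b"
proof -
  have "V a k t = (\<lambda>b. lam k True ^ t * Pv a k True b + lam k False ^ t * Pv a k False b)"
    by (simp add: V_def fun_eq_iff)
  then have "Uk k (V a k t) b = lam k True ^ t * Uk k (Pv a k True) b + lam k False ^ t * Uk k (Pv a k False) b"
    by (simp add: Uk_lin)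
  also have "... = V a k (Suc t) b" by (simp add: Uk_Pv V_def algebra_simps)
  finally show ?thesis by simp
qed

end

context hw begin

lemma dvd_diff_iff: assumes "i < n" "j < n" shows "int n dvd (int j - int i) \<longleftrightarrow> i = j"
proof
  assume d: "int n dvd (int j - int i)"
  show "i = j"
  proof (rule ccontr)
    assume "i \<noteq> j"
    then have "int j - int i \<noteq> 0" by simp
    then have "\<bar>int n\<bar> \<le> \<bar>int j - int i\<bar>" using d dvd_imp_le_int by blast
    then show False using assms by linarith
  qed
qed simp

lemma om_shift: "x mod int n = y mod int n \<Longrightarrow> om ((x - c) * d) = om ((y - c) * d)"
  apply (rule om_cong)
  by (metis mod_mult_left_eq mod_diff_left_eq)

lemma j1_mod: assumes "j < n" shows "int ((j + n - 1) mod n) mod int n = (int j - 1) mod int n"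
proof -
  have a: "int ((j + n - 1) mod n) = (int j + int n - 1) mod int n" using npos by (simp add: zmod_int of_nat_diff)
  have b: "int j + int n - 1 = (int j - 1) + int n" by simp
  show ?thesis unfolding a b mod_add_self2 by simp
qed

lemma j2_mod: "int ((j + 1) mod n) mod int n = (int j + 1) mod int n"
  by (simp add: zmod_int add.commute)

lemma div_add_comm: fixes x y c s :: complex shows "(x / c + y / c) / s = ((x + y) / s) / c"
  by (simp add: add_divide_distrib mult.commute)

lemma div_sub_comm: fixes x y c s :: complex shows "(x / c - y / c) / s = ((x - y) / s) / c"
  by (simp add: diff_divide_distrib mult.commute)

lemma sum_add_div: "(\<Sum>k\<in>A. f k * (g k + h k) / (s::complex)) = ((\<Sum>k\<in>A. f k * g k) + (\<Sum>k\<in>A. f k * h k)) / s"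
  by (simp add: sum.distrib distrib_left add_divide_distrib sum_divide_distrib)

lemma sum_sub_div: "(\<Sum>k\<in>A. f k * (g k - h k) / (s::complex)) = ((\<Sum>k\<in>A. f k * g k) - (\<Sum>k\<in>A. f k * h k)) / s"
  by (simp add: sum_subtractf right_diff_distrib diff_divide_distrib sum_divide_distrib)

lemma walk_closed:
  assumes i: "i < n"
  shows "j < n \<Longrightarrow> walk_state n a i t b j = (\<Sum>k<n. om ((int j - int i) * int k) * V a k t b) / of_nat n"
proof (induction t arbitrary: j b)
  case 0
  have "(\<Sum>k<n. om ((int j - int i) * int k) * V a k 0 b) = ev a b * (\<Sum>k<n. om ((int j - int i) * int k))"
    by (simp add: V_0 sum_distrib_left mult.commute)
  also have "... = ev a b * (if i = j then of_nat n else 0)"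
    using om_sum[of "int j - int i"] dvd_diff_iff[OF i 0(1)] by simp
  finally show ?case using npos
    by (simp add: walk_state_def basis_state_def ev_def)
next
  case (Suc t)
  define s2 where "s2 = complex_of_real (sqrt 2)"
  define \<psi> where "\<psi> = walk_state n a i t"
  have ws: "walk_state n a i (Suc t) = walk_step n \<psi>" by (simp add: walk_state_def \<psi>_def)
  show ?case
  proof (cases b)
    case True
    define j1 where "j1 = (j + n - 1) mod n"
    have j1n: "j1 < n" using npos by (simp add: j1_def)
    have IH: "\<psi> b' j1 = (\<Sum>k<n. om ((int j1 - int i) * int k) * V a k t b') / of_nat n" for b'
      using Suc.IH[OF j1n] by (simp add: \<psi>_def)
    have om1: "om ((int j1 - int i) * int k) = om ((int j - int i) * int k) * om (- int k)" for k
    proof -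
      have "om ((int j1 - int i) * int k) = om ((int j - 1 - int i) * int k)"
        using om_shift[of "int j1" "int j - 1" "int i" "int k"] j1_mod[OF Suc.prems] by (simp add: j1_def)
      also have "... = om ((int j - int i) * int k + - int k)" by (simp add: algebra_simps)
      finally show ?thesis by (simp add: om_add[symmetric])
    qed
    have "walk_state n a i (Suc t) b j = (\<psi> True j1 + \<psi> False j1) / s2"
      using True by (simp add: ws walk_step_def j1_def s2_def)
    also have "... = (\<Sum>k<n. om ((int j1 - int i) * int k) * (V a k t True + V a k t False) / s2) / of_nat n"
      unfolding IH sum_add_div by (rule div_add_comm)
    also have "... = (\<Sum>k<n. om ((int j - int i) * int k) * V a k (Suc t) b) / of_nat n"
      by (rule arg_cong[where f="\<lambda>x. x / of_nat n"], rule sum.cong)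
         (simp_all add: om1 V_Suc Uk_def Ak_def True s2_def)
    finally show ?thesis .
  next
    case False
    define j2 where "j2 = (j + 1) mod n"
    have j2n: "j2 < n" using npos by (simp add: j2_def)
    have IH: "\<psi> b' j2 = (\<Sum>k<n. om ((int j2 - int i) * int k) * V a k t b') / of_nat n" for b'
      using Suc.IH[OF j2n] by (simp add: \<psi>_def)
    have om2: "om ((int j2 - int i) * int k) = om ((int j - int i) * int k) * om (int k)" for k
    proof -
      have "om ((int j2 - int i) * int k) = om ((int j + 1 - int i) * int k)"
        using om_shift[of "int j2" "int j + 1" "int i" "int k"] j2_mod[of j] by (simp add: j2_def)
      also have "... = om ((int j - int i) * int k + int k)" by (simp add: algebra_simps)
      finally show ?thesis by (simp add: om_add)
    qed
    have "walk_state n a i (Suc t) b j = (\<psi> True j2 - \<psi> False j2) / s2"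
      using False by (simp add: ws walk_step_def j2_def s2_def)
    also have "... = (\<Sum>k<n. om ((int j2 - int i) * int k) * (V a k t True - V a k t False) / s2) / of_nat n"
      unfolding IH sum_sub_div by (rule div_sub_comm)
    also have "... = (\<Sum>k<n. om ((int j - int i) * int k) * V a k (Suc t) b) / of_nat n"
      by (rule arg_cong[where f="\<lambda>x. x / of_nat n"], rule sum.cong)
         (simp_all add: om2 V_Suc Uk_def Bk_def False s2_def)
    finally show ?thesis .
  qed
qed

end

context hw begin

definition z :: "nat \<Rightarrow> bool \<Rightarrow> nat \<Rightarrow> bool \<Rightarrow> complex" where
  "z k s k' s' = lam k s * cnj (lam k' s')"
definition W :: "bool \<Rightarrow> nat \<Rightarrow> bool \<Rightarrow> nat \<Rightarrow> bool \<Rightarrow> complex" where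
  "W a k s k' s' = (\<Sum>b\<in>UNIV. Pv a k s b * cnj (Pv a k' s' b))"

lemma VV: "(\<Sum>b\<in>UNIV. V a k t b * cnj (V a k' t b)) = (\<Sum>s\<in>UNIV. \<Sum>s'\<in>UNIV. z k s k' s' ^ t * W a k s k' s')"
  by (simp add: V_def W_def z_def UNIV_bool power_mult_distrib algebra_simps)

lemma sum_cnj_prod: "(\<Sum>k\<in>A. f k) * cnj (\<Sum>k\<in>A. g k) = (\<Sum>k\<in>A. \<Sum>k'\<in>A. f k * cnj (g k'))"
  by (simp add: cnj_sum sum_product)

lemma prob_exp:
  assumes "i < n" "j < n"
  shows "complex_of_real (walk_prob n a i t j) =
    (\<Sum>k<n. \<Sum>k'<n. om ((int j - int i) * (int k - int k')) *
        (\<Sum>s\<in>UNIV. \<Sum>s'\<in>UNIV. z k s k' s' ^ t * W a k s k' s')) / (of_nat n)^2"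
proof -
  define c where "c = int j - int i"
  define S where "S b = (\<Sum>k<n. om (c * int k) * V a k t b)" for b
  have psi: "walk_state n a i t b j = S b / of_nat n" for b
    using walk_closed[OF assms(1) assms(2)] by (simp add: S_def c_def)
  have "complex_of_real (walk_prob n a i t j) = (\<Sum>b\<in>UNIV. walk_state n a i t b j * cnj (walk_state n a i t b j))"
  proof -
    have ns: "(complex_of_real (cmod x))^2 = x * cnj x" for x by (metis complex_norm_square of_real_power)
    show ?thesis by (simp add: walk_prob_def UNIV_bool ns add.commute)
  qed
  also have "... = (\<Sum>b\<in>UNIV. S b * cnj (S b)) / (of_nat n)^2"
    by (simp add: psi sum_divide_distrib power2_eq_square)
  also have "(\<Sum>b\<in>UNIV. S b * cnj (S b)) = (\<Sum>b\<in>UNIV. \<Sum>k<n. \<Sum>k'<n. om (c * (int k - int k')) * (V a k t b * cnj (V a k' t b)))"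
  proof (rule sum.cong[OF refl])
    fix b
    have "S b * cnj (S b) = (\<Sum>k<n. \<Sum>k'<n. om (c * int k) * V a k t b * cnj (om (c * int k') * V a k' t b))"
      unfolding S_def by (rule sum_cnj_prod)
    also have "... = (\<Sum>k<n. \<Sum>k'<n. om (c * (int k - int k')) * (V a k t b * cnj (V a k' t b)))"
    proof (intro sum.cong refl)
      fix k k'
      have "om (c * int k) * cnj (om (c * int k')) = om (c * (int k - int k'))"
        by (simp add: om_neg[symmetric] om_add[symmetric] algebra_simps)
      then show "om (c * int k) * V a k t b * cnj (om (c * int k') * V a k' t b) = om (c * (int k - int k')) * (V a k t b * cnj (V a k' t b))"
        by (simp add: algebra_simps)
    qed
    finally show "S b * cnj (S b) = (\<Sum>k<n. \<Sum>k'<n. om (c * (int k - int k')) * (V a k t b * cnj (V a k' t b)))" .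
  qed
  also have "... = (\<Sum>k<n. \<Sum>k'<n. om (c * (int k - int k')) * (\<Sum>b\<in>UNIV. V a k t b * cnj (V a k' t b)))"
    by (simp add: sum_distrib_left sum.swap[of _ UNIV])
  also have "... = (\<Sum>k<n. \<Sum>k'<n. om (c * (int k - int k')) * (\<Sum>s\<in>UNIV. \<Sum>s'\<in>UNIV. z k s k' s' ^ t * W a k s k' s'))"
    by (simp add: VV)
  finally show ?thesis by (simp add: c_def)
qed

end

context hw begin

definition G :: "nat \<Rightarrow> complex \<Rightarrow> complex" where
  "G T x = (\<Sum>t<T. x ^ t) / of_nat T"
definition Hh :: "nat \<Rightarrow> nat \<Rightarrow> bool \<Rightarrow> nat \<Rightarrow> bool \<Rightarrow> complex" where
  "Hh T k s k' s' = (if k = k' \<and> s = s' then 0 else G T (z k s k' s'))"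
definition Lc :: "bool \<Rightarrow> complex" where
  "Lc a = (\<Sum>k<n. \<Sum>s\<in>UNIV. W a k s k s) / (of_nat n)^2"
definition Aa :: "bool \<Rightarrow> nat \<Rightarrow> nat \<Rightarrow> nat \<Rightarrow> complex" where
  "Aa a T k k' = (\<Sum>s\<in>UNIV. \<Sum>s'\<in>UNIV. Hh T k s k' s' * W a k s k' s')"
definition Ec :: "bool \<Rightarrow> nat \<Rightarrow> nat \<Rightarrow> nat \<Rightarrow> complex" where
  "Ec a i T j = (\<Sum>k<n. \<Sum>k'<n. om ((int j - int i) * (int k - int k')) * Aa a T k k') / (of_nat n)^2"

lemma lam_norm: "lam k s * cnj (lam k s) = 1"
proof -
  have "(rho k)^2 + (- sk k / sqrt 2)^2 = 1" using rho_sq by (simp add: power_divide)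
  then show ?thesis by (simp add: complex_eq_iff lam_def power2_eq_square)
qed

lemma G1: "T \<ge> 1 \<Longrightarrow> G T 1 = 1"
  by (simp add: G_def)

lemma sum_swap3: "(\<Sum>t\<in>A. \<Sum>k\<in>B. \<Sum>k'\<in>C. g t k k') = (\<Sum>k\<in>B. \<Sum>k'\<in>C. \<Sum>t\<in>A. g t k k')"
  by (subst sum.swap, rule sum.cong[OF refl], rule sum.swap)

lemma avg_exp0:
  assumes "i < n" "j < n"
  shows "complex_of_real (avg_prob n a i T j) =
    (\<Sum>k<n. \<Sum>k'<n. om ((int j - int i) * (int k - int k')) *
        (\<Sum>s\<in>UNIV. \<Sum>s'\<in>UNIV. G T (z k s k' s') * W a k s k' s')) / (of_nat n)^2"
proof -
  define c where "c = int j - int i"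
  have inner: "(\<Sum>t<T. om (c * (int k - int k')) * (\<Sum>s\<in>UNIV. \<Sum>s'\<in>UNIV. z k s k' s' ^ t * W a k s k' s'))
     = om (c * (int k - int k')) * (\<Sum>s\<in>UNIV. \<Sum>s'\<in>UNIV. (\<Sum>t<T. z k s k' s' ^ t) * W a k s k' s')" for k k'
  proof -
    have "(\<Sum>t<T. om (c * (int k - int k')) * (\<Sum>s\<in>UNIV. \<Sum>s'\<in>UNIV. z k s k' s' ^ t * W a k s k' s'))
      = om (c * (int k - int k')) * (\<Sum>t<T. \<Sum>s\<in>UNIV. \<Sum>s'\<in>UNIV. z k s k' s' ^ t * W a k s k' s')"
      by (rule sum_distrib_left[symmetric])
    also have "(\<Sum>t<T. \<Sum>s\<in>UNIV. \<Sum>s'\<in>UNIV. z k s k' s' ^ t * W a k s k' s')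
       = (\<Sum>s\<in>UNIV. \<Sum>s'\<in>UNIV. \<Sum>t<T. z k s k' s' ^ t * W a k s k' s')"
      by (rule sum_swap3)
    also have "... = (\<Sum>s\<in>UNIV. \<Sum>s'\<in>UNIV. (\<Sum>t<T. z k s k' s' ^ t) * W a k s k' s')"
      by (simp only: sum_distrib_right)
    finally show ?thesis .
  qed
  have "complex_of_real (avg_prob n a i T j) = (\<Sum>t<T. complex_of_real (walk_prob n a i t j)) / of_nat T"
    by (simp add: avg_prob_def)
  also have "... = (\<Sum>t<T. \<Sum>k<n. \<Sum>k'<n. om (c * (int k - int k')) *
        (\<Sum>s\<in>UNIV. \<Sum>s'\<in>UNIV. z k s k' s' ^ t * W a k s k' s')) / (of_nat n)^2 / of_nat T"
    by (simp add: prob_exp[OF assms] c_def sum_divide_distrib)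
  also have "(\<Sum>t<T. \<Sum>k<n. \<Sum>k'<n. om (c * (int k - int k')) *
        (\<Sum>s\<in>UNIV. \<Sum>s'\<in>UNIV. z k s k' s' ^ t * W a k s k' s'))
      = (\<Sum>k<n. \<Sum>k'<n. om (c * (int k - int k')) *
        (\<Sum>s\<in>UNIV. \<Sum>s'\<in>UNIV. (\<Sum>t<T. z k s k' s' ^ t) * W a k s k' s'))"
    by (simp add: sum_swap3 inner)
  finally show ?thesis
    by (simp add: c_def G_def sum_divide_distrib sum_distrib_left mult.commute mult.left_commute)
qed

lemma avg_exp:
  assumes "i < n" "j < n" "T \<ge> 1"
  shows "complex_of_real (avg_prob n a i T j) = Lc a + Ec a i T j"
proof -
  define c where "c = int j - int i"
  have Gd: "G T (z k s k' s') = Hh T k s k' s' + (if k = k' \<and> s = s' then 1 else 0)" for k s k' s'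
    using assms(3) by (auto simp: Hh_def z_def lam_norm G1)
  have diag: "(\<Sum>k'<n. om (c * (int k - int k')) * (\<Sum>s\<in>UNIV. \<Sum>s'\<in>UNIV. (if k = k' \<and> s = s' then 1 else 0) * W a k s k' s'))
      = (\<Sum>s\<in>UNIV. W a k s k s)" if k: "k < n" for k
  proof -
    have "(\<Sum>k'<n. om (c * (int k - int k')) * (\<Sum>s\<in>UNIV. \<Sum>s'\<in>UNIV. (if k = k' \<and> s = s' then 1 else 0) * W a k s k' s'))
      = (\<Sum>k'<n. if k' = k then (\<Sum>s\<in>UNIV. W a k s k s) else 0)"
      by (rule sum.cong) (auto simp: UNIV_bool)
    also have "... = (\<Sum>s\<in>UNIV. W a k s k s)" using k by simp
    finally show ?thesis .
  qed
  have split: "om (c * (int k - int k')) * (\<Sum>s\<in>UNIV. \<Sum>s'\<in>UNIV. G T (z k s k' s') * W a k s k' s')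
     = om (c * (int k - int k')) * Aa a T k k' +
       om (c * (int k - int k')) * (\<Sum>s\<in>UNIV. \<Sum>s'\<in>UNIV. (if k = k' \<and> s = s' then 1 else 0) * W a k s k' s')" for k k'
    by (simp add: Gd Aa_def distrib_right sum.distrib distrib_left)
  have "(\<Sum>k<n. \<Sum>k'<n. om (c * (int k - int k')) *
        (\<Sum>s\<in>UNIV. \<Sum>s'\<in>UNIV. G T (z k s k' s') * W a k s k' s'))
      = (\<Sum>k<n. \<Sum>k'<n. om (c * (int k - int k')) * Aa a T k k') + (\<Sum>k<n. \<Sum>s\<in>UNIV. W a k s k s)"
    by (simp add: split sum.distrib diag)
  then show ?thesis
    by (simp add: avg_exp0[OF assms(1,2)] Lc_def Ec_def c_def add_divide_distrib)
qed

end

context hw begin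

lemma invol: assumes "x < n" "k < n" shows "(k + n - (k + n - x) mod n) mod n = x"
proof (cases "x \<le> k")
  case True
  then have "(k + n - x) mod n = k - x" using assms
    by (metis add.commute add_diff_assoc2 diff_le_self mod_add_self1 mod_less order_le_less_trans)
  then show ?thesis using True assms by simp
next
  case False
  then have "(k + n - x) mod n = k + n - x" using assms by simp
  then show ?thesis using False assms by simp
qed

lemma reidx: assumes "k < n" shows "(\<Sum>k'<n. f k') = (\<Sum>d<n. f ((k + n - d) mod n))"
  by (rule sum.reindex_bij_witness[where i="\<lambda>x. (k + n - x) mod n" and j="\<lambda>x. (k + n - x) mod n"])
     (use assms invol in auto)

lemma om_cong2: "y mod int n = y' mod int n \<Longrightarrow> om (x * y) = om (x * y')"
  by (rule om_cong) (metis mod_mult_right_eq)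

lemma kd_mod: assumes "k < n" "d < n"
  shows "(int k - int ((k + n - d) mod n)) mod int n = int d mod int n"
proof -
  have "int ((k + n - d) mod n) = (int k + int n - int d) mod int n"
    using assms by (simp add: zmod_int of_nat_diff)
  then have "(int k - int ((k + n - d) mod n)) mod int n = (int k - (int k + int n - int d)) mod int n"
    by (simp add: mod_diff_right_eq)
  also have "int k - (int k + int n - int d) = int d + (- 1) * int n" by simp
  finally show ?thesis by (metis mod_mult_self1)
qed

lemma om_sum_shift: "(\<Sum>j<n. om ((int j - int i) * m)) = om (- int i * m) * (if int n dvd m then of_nat n else 0)"
proof -
  have "(\<Sum>j<n. om ((int j - int i) * m)) = (\<Sum>j<n. om (- int i * m) * om (m * int j))"
    by (rule sum.cong) (simp_all add: om_add[symmetric] algebra_simps)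
  also have "... = om (- int i * m) * (\<Sum>j<n. om (m * int j))" by (simp add: sum_distrib_left)
  finally show ?thesis by (simp add: om_sum)
qed

lemma parseval_bound:
  fixes A :: "nat \<Rightarrow> nat \<Rightarrow> complex" and \<beta> :: "nat \<Rightarrow> real"
  assumes \<beta>: "\<And>d. d < n \<Longrightarrow> (\<Sum>k<n. cmod (A k ((k + n - d) mod n))) \<le> \<beta> d"
  shows "(\<Sum>j<n. cmod (\<Sum>k<n. \<Sum>k'<n. om ((int j - int i) * (int k - int k')) * A k k'))
          \<le> real n * sqrt (\<Sum>d<n. (\<beta> d)^2)"
proof -
  define B where "B d = (\<Sum>k<n. A k ((k + n - d) mod n))" for d
  define S where "S j = (\<Sum>k<n. \<Sum>k'<n. om ((int j - int i) * (int k - int k')) * A k k')" for j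
  have S: "S j = (\<Sum>d<n. om ((int j - int i) * int d) * B d)" for j
  proof -
    have "S j = (\<Sum>k<n. \<Sum>d<n. om ((int j - int i) * (int k - int ((k + n - d) mod n))) * A k ((k + n - d) mod n))"
      unfolding S_def by (rule sum.cong[OF refl]) (rule reidx, simp)
    also have "... = (\<Sum>k<n. \<Sum>d<n. om ((int j - int i) * int d) * A k ((k + n - d) mod n))"
    proof (intro sum.cong refl)
      fix k d assume "k \<in> {..<n}" "d \<in> {..<n}"
      then show "om ((int j - int i) * (int k - int ((k + n - d) mod n))) * A k ((k + n - d) mod n) =
          om ((int j - int i) * int d) * A k ((k + n - d) mod n)"
        using om_cong2[OF kd_mod[of k d], of "int j - int i"] by simp
    qed
    also have "... = (\<Sum>d<n. \<Sum>k<n. om ((int j - int i) * int d) * A k ((k + n - d) mod n))"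
      by (rule sum.swap)
    also have "... = (\<Sum>d<n. om ((int j - int i) * int d) * B d)"
      by (simp add: B_def sum_distrib_left)
    finally show ?thesis .
  qed
  have nsq: "(complex_of_real (cmod x))^2 = x * cnj x" for x by (metis complex_norm_square of_real_power)
  have "complex_of_real (\<Sum>j<n. (cmod (S j))^2) = (\<Sum>j<n. S j * cnj (S j))"
    by (simp add: nsq)
  also have "... = (\<Sum>j<n. \<Sum>d<n. \<Sum>d'<n. om ((int j - int i) * (int d - int d')) * (B d * cnj (B d')))"
  proof (rule sum.cong[OF refl])
    fix j
    have "S j * cnj (S j) = (\<Sum>d<n. \<Sum>d'<n. om ((int j - int i) * int d) * B d * cnj (om ((int j - int i) * int d') * B d'))"
      unfolding S by (rule sum_cnj_prod)
    also have "... = (\<Sum>d<n. \<Sum>d'<n. om ((int j - int i) * (int d - int d')) * (B d * cnj (B d')))"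
    proof (intro sum.cong refl)
      fix d d'
      have "om ((int j - int i) * int d) * cnj (om ((int j - int i) * int d')) = om ((int j - int i) * (int d - int d'))"
        by (simp add: om_neg[symmetric] om_add[symmetric] algebra_simps)
      then show "om ((int j - int i) * int d) * B d * cnj (om ((int j - int i) * int d') * B d') = om ((int j - int i) * (int d - int d')) * (B d * cnj (B d'))"
        by (simp add: algebra_simps)
    qed
    finally show "S j * cnj (S j) = (\<Sum>d<n. \<Sum>d'<n. om ((int j - int i) * (int d - int d')) * (B d * cnj (B d')))" .
  qed
  also have "... = (\<Sum>d<n. \<Sum>d'<n. (\<Sum>j<n. om ((int j - int i) * (int d - int d'))) * (B d * cnj (B d')))"
    by (subst sum_swap3) (intro sum.cong refl; rule sum_distrib_right[symmetric])
  also have "... = (\<Sum>d<n. \<Sum>d'<n. (if d' = d then of_nat n * (B d * cnj (B d)) else 0))"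
    by (intro sum.cong refl) (auto simp: om_sum_shift dvd_diff_iff)
  also have "... = of_nat n * (\<Sum>d<n. B d * cnj (B d))"
    by (simp add: sum_distrib_left)
  also have "... = complex_of_real (real n * (\<Sum>d<n. (cmod (B d))^2))"
    by (simp add: nsq)
  finally have pars: "(\<Sum>j<n. (cmod (S j))^2) = real n * (\<Sum>d<n. (cmod (B d))^2)"
    using of_real_eq_iff by blast
  have Bb: "(\<Sum>d<n. (cmod (B d))^2) \<le> (\<Sum>d<n. (\<beta> d)^2)"
  proof (rule sum_mono)
    fix d assume "d \<in> {..<n}"
    then have dn: "d < n" by simp
    have "cmod (B d) \<le> \<beta> d" unfolding B_def by (rule order_trans[OF norm_sum \<beta>[OF dn]])
    then show "(cmod (B d))^2 \<le> (\<beta> d)^2" by (simp add: power_mono)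
  qed
  have CS: "(\<Sum>j<n. 1 * cmod (S j))^2 \<le> (\<Sum>j<n. 1^2) * (\<Sum>j<n. (cmod (S j))^2)"
    by (rule Cauchy_Schwarz_ineq_sum)
  then have "(\<Sum>j<n. cmod (S j))^2 \<le> real n * (real n * (\<Sum>d<n. (cmod (B d))^2))"
    by (simp add: pars)
  also have "... \<le> real n * (real n * (\<Sum>d<n. (\<beta> d)^2))"
    using Bb by (simp add: mult_left_mono)
  also have "... = (real n * sqrt (\<Sum>d<n. (\<beta> d)^2))^2"
  proof -
    have "0 \<le> (\<Sum>d<n. (\<beta> d)^2)" by (simp add: sum_nonneg)
    then show ?thesis by (simp add: power_mult_distrib power2_eq_square)
  qed
  finally have "(\<Sum>j<n. cmod (S j))^2 \<le> (real n * sqrt (\<Sum>d<n. (\<beta> d)^2))^2" .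
  then have "(\<Sum>j<n. cmod (S j)) \<le> real n * sqrt (\<Sum>d<n. (\<beta> d)^2)"
    by (rule power2_le_imp_le) (simp add: sum_nonneg)
  then show ?thesis by (simp add: S_def)
qed

end

lemma harm_le_ln: assumes "1 \<le> n" shows "(harm n :: real) \<le> 1 + ln (real n)"
proof -
  have "decseq (\<lambda>m. (harm (Suc m) :: real) - ln (real (Suc m)))" by (rule decseq_harm_diff_ln)
  then have "(harm (Suc (n - 1)) :: real) - ln (real (Suc (n - 1))) \<le> harm (Suc 0) - ln (real (Suc 0))"
    unfolding decseq_def by (rule allE[where x=0], rule_tac allE[where x="n-1"]) auto
  moreover have "Suc (n - 1) = n" using assms by simp
  moreover have "(harm 0::real) = 0" by (simp add: harm_def)
  ultimately show ?thesis by (simp add: harm_Suc)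
qed

lemma inj_harm:
  assumes "inj_on h P" "finite P" "h ` P \<subseteq> {1..N}"
  shows "(\<Sum>k\<in>P. 1 / real (h k)) \<le> harm N"
proof -
  have "(\<Sum>k\<in>P. 1 / real (h k)) = (\<Sum>m\<in>h ` P. 1 / real m)"
    using assms(1) by (simp add: sum.reindex)
  also have "... \<le> (\<Sum>m\<in>{1..N}. 1 / real m)"
    by (rule sum_mono2) (use assms in auto)
  also have "... = harm N" by (simp add: harm_def divide_inverse)
  finally show ?thesis .
qed

lemma sin_2pi_int: "sin (x + 2 * pi * real_of_int t) = sin x"
  by (simp add: sin_add)

context hw begin

definition sym :: "int \<Rightarrow> int" where
  "sym N = (if N mod (2 * int n) \<le> int n then N mod (2 * int n) else N mod (2 * int n) - 2 * int n)"

lemma sym_bound: "\<bar>sym N\<bar> \<le> int n"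
proof -
  have "N mod (2*int n) < 2 * int n" "0 \<le> N mod (2*int n)" using npos by simp_all
  then show ?thesis by (auto simp: sym_def)
qed

lemma sym_mod: "sym N mod (2 * int n) = N mod (2 * int n)"
  using npos by (auto simp: sym_def)

lemma sym_decomp: "\<exists>l. N = 2 * int n * l + sym N"
proof (cases "N mod (2 * int n) \<le> int n")
  case True
  then show ?thesis
    by (metis sym_def add.commute mult.commute div_mult_mod_eq)
next
  case False
  have e: "2 * int n * (N div (2 * int n)) + N mod (2 * int n) = N" by (rule mult_div_mod_eq)
  have "N = 2 * int n * (N div (2 * int n) + 1) + (N mod (2 * int n) - 2 * int n)"
    using e by (simp add: algebra_simps)
  then show ?thesis using False unfolding sym_def by auto
qed

lemma sin_sym_lb: "\<bar>real_of_int (sym N)\<bar> / (2 * real n) \<le> \<bar>sin (pi * real_of_int N / (2 * real n))\<bar>"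
proof -
  obtain l where l: "N = 2 * int n * l + sym N" using sym_decomp by blast
  define y where "y = pi * real_of_int N / (2 * real n)"
  have y: "y - real_of_int l * pi = pi * real_of_int (sym N) / (2 * real n)"
  proof -
    have "real_of_int N = 2 * real n * real_of_int l + real_of_int (sym N)"
      by (subst l) simp
    then show ?thesis using npos unfolding y_def by (simp add: field_simps)
  qed
  have sb: "\<bar>real_of_int (sym N)\<bar> \<le> real n" using sym_bound[of N] by linarith
  have ab: "\<bar>y - real_of_int l * pi\<bar> = pi * \<bar>real_of_int (sym N)\<bar> / (2 * real n)"
    unfolding y by (simp add: abs_mult)
  have "\<bar>y - real_of_int l * pi\<bar> \<le> pi / 2"
    unfolding ab using sb npos pi_gt_zero by (simp add: field_simps mult_left_mono)
  also have "... \<le> 2" using pi_less_4 by simp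
  finally have "\<bar>y - real_of_int l * pi\<bar> / 3 \<le> \<bar>sin y\<bar>" by (rule sin_lb)
  moreover have "\<bar>real_of_int (sym N)\<bar> / (2 * real n) \<le> \<bar>y - real_of_int l * pi\<bar> / 3"
    unfolding ab using pi_gt3 npos by (simp add: field_simps mult_right_mono)
  ultimately show ?thesis unfolding y_def by linarith
qed


definition md :: "nat \<Rightarrow> nat" where "md d = (if d = 0 then 1 else min d (n - d))"
definition NN :: "nat \<Rightarrow> nat \<Rightarrow> int" where "NN d k = 2 * (2 * int k - int d) + int n"

lemma sym_2d: assumes "0 < d" "d < n" shows "\<bar>sym (2 * int d)\<bar> = 2 * int (md d)"
proof -
  have m: "(2 * int d) mod (2 * int n) = 2 * int d" using assms by simp
  have "2 * int d \<noteq> int n" using nodd by (metis even_of_nat_iff dvd_triv_left of_nat_mult of_nat_numeral)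
  then show ?thesis using assms unfolding sym_def md_def m by auto
qed

lemma odd_sym: assumes "odd N" shows "odd (sym N)"
proof -
  have "sym N mod 2 = N mod 2"
    by (metis sym_mod mod_mod_cancel dvd_triv_left)
  then show ?thesis using assms by (simp add: odd_iff_mod_2_eq_one)
qed

lemma odd_NN: "odd (NN d k)"
  using nodd by (simp add: NN_def)

lemma sym_NN_ne0: "sym (NN d k) \<noteq> 0"
  using odd_sym[OF odd_NN[of d k]] by auto

lemma n_dvd_2: assumes "int n dvd 2 * x" shows "int n dvd x"
proof -
  have "coprime (int n) 2" using nodd by (simp add: coprime_commute)
  then show ?thesis using assms coprime_dvd_mult_right_iff by blast
qed

lemma sym_NN_inj: assumes "k1 < n" "k2 < n" "sym (NN d k1) = sym (NN d k2)" shows "k1 = k2"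
proof -
  have "NN d k1 mod (2 * int n) = NN d k2 mod (2 * int n)"
    by (metis assms(3) sym_mod)
  then have "2 * int n dvd NN d k1 - NN d k2" by (simp add: mod_eq_dvd_iff)
  moreover have "NN d k1 - NN d k2 = 2 * (2 * (int k1 - int k2))" by (simp add: NN_def algebra_simps)
  ultimately have "2 * int n dvd 2 * (2 * (int k1 - int k2))" by metis
  then have "int n dvd 2 * (int k1 - int k2)" by (metis dvd_mult_cancel_left zero_neq_numeral)
  then have "int n dvd (int k1 - int k2)" by (rule n_dvd_2)
  then show ?thesis using dvd_diff_iff[OF assms(2) assms(1)] by simp
qed

lemma sk_shift: assumes "k < n" "d < n"
  shows "sk ((k + n - d) mod n) = sin (2 * pi * (real k - real d) / real n)"
proof -
  define q where "q = (k + n - d) div n"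
  have "real ((k + n - d) mod n) + real n * real q = real (k + n - d)"
    unfolding q_def by (metis of_nat_add of_nat_mult mod_mult_div_eq)
  moreover have "real (k + n - d) = real k + real n - real d" using assms by (simp add: of_nat_diff)
  ultimately have e: "real ((k + n - d) mod n) = real k - real d + real n * real_of_int (1 - int q)"
    by (simp add: algebra_simps)
  have "2 * pi * real ((k + n - d) mod n) / real n = 2 * pi * (real k - real d) / real n + 2 * pi * real_of_int (1 - int q)"
    unfolding e using npos by (simp add: field_simps)
  then show ?thesis unfolding sk_def by (simp only: sin_2pi_int)
qed

lemma sk_diff: assumes "k < n" "d < n"
  shows "sk k - sk ((k + n - d) mod n) = 2 * sin (pi * real_of_int (2 * int d) / (2 * real n)) * sin (pi * real_of_int (NN d k) / (2 * real n))"
proof -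
  define w where "w = 2 * pi * real k / real n"
  define z where "z = 2 * pi * (real k - real d) / real n"
  have 1: "(w - z) / 2 = pi * real_of_int (2 * int d) / (2 * real n)"
    using npos by (simp add: w_def z_def field_simps)
  have 2: "(w + z) / 2 + pi / 2 = pi * real_of_int (NN d k) / (2 * real n)"
    using npos by (simp add: w_def z_def NN_def field_simps)
  have 3: "cos x = sin (x + pi / 2)" for x by (simp add: sin_add)
  have "sk k - sk ((k + n - d) mod n) = sin w - sin z"
    unfolding w_def z_def sk_shift[OF assms] by (simp add: sk_def)
  also have "... = 2 * sin ((w - z) / 2) * cos ((w + z) / 2)" by (rule sin_diff_sin)
  also have "... = 2 * sin (pi * real_of_int (2 * int d) / (2 * real n)) * sin (pi * real_of_int (NN d k) / (2 * real n))"
    unfolding 1 3 2 ..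
  finally show ?thesis .
qed

lemma sk_diff_lb: assumes "k < n" "0 < d" "d < n"
  shows "real (md d) * \<bar>real_of_int (sym (NN d k))\<bar> / (real n)^2 \<le> \<bar>sk k - sk ((k + n - d) mod n)\<bar>"
proof -
  have a: "real (md d) / real n \<le> \<bar>sin (pi * real_of_int (2 * int d) / (2 * real n))\<bar>"
  proof -
    have "\<bar>real_of_int (sym (2 * int d))\<bar> = 2 * real (md d)"
      using sym_2d[OF assms(2,3)] by (metis of_int_abs of_int_mult of_int_numeral of_int_of_nat_eq)
    then show ?thesis using sin_sym_lb[of "2 * int d"] npos by simp
  qed
  have b: "\<bar>real_of_int (sym (NN d k))\<bar> / (2 * real n) \<le> \<bar>sin (pi * real_of_int (NN d k) / (2 * real n))\<bar>"
    by (rule sin_sym_lb)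
  have "real (md d) * \<bar>real_of_int (sym (NN d k))\<bar> / (real n)^2
      = 2 * (real (md d) / real n) * (\<bar>real_of_int (sym (NN d k))\<bar> / (2 * real n))"
    using npos by (simp add: field_simps power2_eq_square)
  also have "... \<le> 2 * \<bar>sin (pi * real_of_int (2 * int d) / (2 * real n))\<bar> * \<bar>sin (pi * real_of_int (NN d k) / (2 * real n))\<bar>"
    by (intro mult_mono mult_left_mono a b) auto
  also have "... = \<bar>sk k - sk ((k + n - d) mod n)\<bar>"
    by (simp add: sk_diff[OF assms(1,3)] abs_mult)
  finally show ?thesis .
qed

lemma sum_inv_sym: "(\<Sum>k<n. 1 / \<bar>real_of_int (sym (NN d k))\<bar>) \<le> 2 * (1 + ln (real n))"
proof -
  define P where "P = {k. k < n \<and> sym (NN d k) > 0}"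
  define Q where "Q = {k. k < n \<and> sym (NN d k) < 0}"
  have PQ: "{..<n} = P \<union> Q"
    by (auto simp: P_def Q_def) (metis sym_NN_ne0 not_less_iff_gr_or_eq)
  have fin: "finite P" "finite Q" by (auto simp: P_def Q_def)
  have disj: "P \<inter> Q = {}" by (auto simp: P_def Q_def)
  have hn: "harm n \<le> 1 + ln (real n)" using npos by (intro harm_le_ln) simp
  have sP: "(\<Sum>k\<in>P. 1 / \<bar>real_of_int (sym (NN d k))\<bar>) \<le> harm n"
  proof -
    have "(\<Sum>k\<in>P. 1 / \<bar>real_of_int (sym (NN d k))\<bar>) = (\<Sum>k\<in>P. 1 / real (nat (sym (NN d k))))"
      by (rule sum.cong) (auto simp: P_def)
    also have "... \<le> harm n"
    proof (rule inj_harm[OF _ fin(1)])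
      show "inj_on (\<lambda>k. nat (sym (NN d k))) P"
      proof (rule inj_onI)
        fix x y assume xy: "x \<in> P" "y \<in> P" "nat (sym (NN d x)) = nat (sym (NN d y))"
        then have "sym (NN d x) = sym (NN d y)" by (simp add: P_def eq_nat_nat_iff)
        then show "x = y" using xy sym_NN_inj by (auto simp: P_def)
      qed
      show "(\<lambda>k. nat (sym (NN d k))) ` P \<subseteq> {1..n}"
      proof (rule image_subsetI)
        fix k assume "k \<in> P"
        then have "0 < sym (NN d k)" "sym (NN d k) \<le> int n" using sym_bound[of "NN d k"] by (auto simp: P_def)
        then show "nat (sym (NN d k)) \<in> {1..n}" by auto
      qed
    qed
    finally show ?thesis .
  qed
  have sQ: "(\<Sum>k\<in>Q. 1 / \<bar>real_of_int (sym (NN d k))\<bar>) \<le> harm n"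
  proof -
    have "(\<Sum>k\<in>Q. 1 / \<bar>real_of_int (sym (NN d k))\<bar>) = (\<Sum>k\<in>Q. 1 / real (nat (- sym (NN d k))))"
      by (rule sum.cong) (auto simp: Q_def)
    also have "... \<le> harm n"
    proof (rule inj_harm[OF _ fin(2)])
      show "inj_on (\<lambda>k. nat (- sym (NN d k))) Q"
      proof (rule inj_onI)
        fix x y assume xy: "x \<in> Q" "y \<in> Q" "nat (- sym (NN d x)) = nat (- sym (NN d y))"
        then have "sym (NN d x) = sym (NN d y)" by (simp add: Q_def eq_nat_nat_iff)
        then show "x = y" using xy sym_NN_inj by (auto simp: Q_def)
      qed
      show "(\<lambda>k. nat (- sym (NN d k))) ` Q \<subseteq> {1..n}"
      proof (rule image_subsetI)
        fix k assume "k \<in> Q"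
        then have "sym (NN d k) < 0" "- sym (NN d k) \<le> int n" using sym_bound[of "NN d k"] by (auto simp: Q_def)
        then show "nat (- sym (NN d k)) \<in> {1..n}" by auto
      qed
    qed
    finally show ?thesis .
  qed
  have "(\<Sum>k<n. 1 / \<bar>real_of_int (sym (NN d k))\<bar>) = (\<Sum>k\<in>P. 1 / \<bar>real_of_int (sym (NN d k))\<bar>) + (\<Sum>k\<in>Q. 1 / \<bar>real_of_int (sym (NN d k))\<bar>)"
    unfolding PQ by (rule sum.union_disjoint[OF fin disj])
  then show ?thesis using sP sQ hn by (smt (verit))
qed

end

context hw begin

lemma cmod_lam: "cmod (lam k s) = 1"
proof -
  have "complex_of_real ((cmod (lam k s))^2) = lam k s * cnj (lam k s)" by (rule complex_norm_square)
  then have "complex_of_real ((cmod (lam k s))^2) = 1" by (simp only: lam_norm)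
  then have "(cmod (lam k s))^2 = 1" by (metis of_real_eq_1_iff)
  then show ?thesis using norm_ge_zero[of "lam k s"] by (auto simp add: power2_eq_1_iff)
qed

lemma lam_diff_ge1: "1 \<le> cmod (lam k s - lam k (\<not> s))"
proof -
  have "Re (lam k s - lam k (\<not> s)) = (if s then 2 * rho k else - 2 * rho k)" by (simp add: lam_def)
  then have "\<bar>Re (lam k s - lam k (\<not> s))\<bar> = 2 * rho k" using rho_pos[of k] by auto
  moreover have "1 \<le> 2 * rho k"
  proof -
    have "sqrt 2 \<le> 2" using real_sqrt_le_mono[of 2 4] by simp
    then have "1 / 2 \<le> 1 / sqrt 2" by (intro frac_le) auto
    then show ?thesis using rho_ge[of k] by linarith
  qed
  ultimately show ?thesis using abs_Re_le_cmod[of "lam k s - lam k (\<not> s)"] by linarith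
qed

lemma norm_Uk_ev: "cmod (Uk k (ev a) b) \<le> 1"
proof -
  have "cmod (Ak k) \<le> 1" "cmod (Bk k) \<le> 1"
    by (simp_all add: Ak_def Bk_def norm_divide real_sqrt_ge_1_iff)
  moreover have "cmod (ev a True + ev a False) = 1" "cmod (ev a True - ev a False) = 1"
    by (cases a; simp add: ev_def)+
  ultimately show ?thesis unfolding Uk_def
    by (auto simp: norm_mult intro: mult_le_one)
qed

lemma norm_Pv: "cmod (Pv a k s b) \<le> 2"
proof -
  have num: "cmod (Uk k (ev a) b - lam k (\<not> s) * ev a b) \<le> 2"
  proof -
    have "cmod (lam k (\<not> s) * ev a b) \<le> 1" by (simp add: norm_mult cmod_lam ev_def)
    then show ?thesis using norm_Uk_ev[of k a b] norm_triangle_ineq4[of "Uk k (ev a) b" "lam k (\<not> s) * ev a b"]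
      by linarith
  qed
  have den: "1 \<le> cmod (lam k s - lam k (\<not> s))" by (rule lam_diff_ge1)
  have "cmod (Pv a k s b) = cmod (Uk k (ev a) b - lam k (\<not> s) * ev a b) / cmod (lam k s - lam k (\<not> s))"
    by (simp add: Pv_def norm_divide)
  also have "... \<le> 2 / 1"
    by (rule frac_le) (use num den in auto)
  finally show ?thesis by simp
qed

lemma norm_W: "cmod (W a k s k' s') \<le> 8"
proof -
  have t: "cmod (Pv a k s b * cnj (Pv a k' s' b)) \<le> 4" for b
  proof -
    have "cmod (Pv a k s b * cnj (Pv a k' s' b)) = cmod (Pv a k s b) * cmod (Pv a k' s' b)"
      by (simp add: norm_mult)
    also have "... \<le> 2 * 2" by (rule mult_mono) (simp_all add: norm_Pv)
    finally show ?thesis by simp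
  qed
  have "cmod (W a k s k' s') \<le> cmod (Pv a k s True * cnj (Pv a k' s' True)) + cmod (Pv a k s False * cnj (Pv a k' s' False))"
    by (simp add: W_def UNIV_bool norm_triangle_ineq add.commute)
  then show ?thesis using t[of True] t[of False] by linarith
qed

lemma one_minus_z: "cmod (1 - z k s k' s') = cmod (lam k' s' - lam k s)"
proof -
  have "lam k' s' * (1 - z k s k' s') = lam k' s' - lam k s * (lam k' s' * cnj (lam k' s'))"
    by (simp add: z_def algebra_simps)
  also have "... = lam k' s' - lam k s" by (simp add: lam_norm)
  finally have "cmod (lam k' s') * cmod (1 - z k s k' s') = cmod (lam k' s' - lam k s)"
    by (metis norm_mult)
  then show ?thesis by (simp add: cmod_lam)
qed

lemma G_bound:
  assumes "cmod x = 1" "x \<noteq> 1" "1 \<le> T"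
  shows "cmod (G T x) \<le> 2 / (real T * cmod (1 - x))"
proof -
  have "(\<Sum>t<T. x ^ t) = (1 - x ^ T) / (1 - x)" using assms(2) by (simp add: sum_gp_strict)
  moreover have "cmod (1 - x ^ T) \<le> 2"
    using norm_triangle_ineq4[of 1 "x^T"] assms(1) by (simp add: norm_power)
  moreover have "0 < cmod (1 - x)" using assms(2) by simp
  ultimately have "cmod (\<Sum>t<T. x ^ t) \<le> 2 / cmod (1 - x)"
    by (simp add: norm_divide divide_right_mono)
  then have "cmod (\<Sum>t<T. x ^ t) / real T \<le> (2 / cmod (1 - x)) / real T"
    by (rule divide_right_mono) simp
  moreover have "cmod (G T x) = cmod (\<Sum>t<T. x ^ t) / real T" by (simp add: G_def norm_divide)
  ultimately show ?thesis by (simp add: mult.commute)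
qed

lemma rho_half: "1/2 \<le> rho k"
proof -
  have "sqrt 2 \<le> 2" using real_sqrt_le_mono[of 2 4] by simp
  then have "1 / 2 \<le> 1 / sqrt 2" by (intro frac_le) auto
  then show ?thesis using rho_ge[of k] by linarith
qed

lemma gap_ne: assumes "s \<noteq> s'" shows "1 \<le> cmod (lam k' s' - lam k s)"
proof -
  have "\<bar>Re (lam k' s' - lam k s)\<bar> = rho k' + rho k"
    using assms rho_pos[of k] rho_pos[of k'] by (cases s; cases s'; simp add: lam_def)
  then show ?thesis using abs_Re_le_cmod[of "lam k' s' - lam k s"] rho_half[of k] rho_half[of k'] by linarith
qed

lemma gap_same: "\<bar>sk k - sk k'\<bar> / sqrt 2 \<le> cmod (lam k' s - lam k s)"
proof -
  have "Im (lam k' s - lam k s) = (sk k - sk k') / sqrt 2" by (simp add: lam_def diff_divide_distrib)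
  then have "\<bar>Im (lam k' s - lam k s)\<bar> = \<bar>sk k - sk k'\<bar> / sqrt 2" by simp
  then show ?thesis using abs_Im_le_cmod[of "lam k' s - lam k s"] by linarith
qed

lemma cmod_z: "cmod (z k s k' s') = 1"
  by (simp add: z_def norm_mult cmod_lam)

lemma Hh_bound1: assumes "s \<noteq> s'" "1 \<le> T" shows "cmod (Hh T k s k' s') \<le> 2 / real T"
proof -
  have g: "1 \<le> cmod (1 - z k s k' s')" using gap_ne[OF assms(1)] by (simp add: one_minus_z)
  then have "z k s k' s' \<noteq> 1" by auto
  then have "cmod (G T (z k s k' s')) \<le> 2 / (real T * cmod (1 - z k s k' s'))"
    using G_bound cmod_z assms(2) by blast
  also have "... \<le> 2 / (real T * 1)"
  proof (rule frac_le)
    show "real T * 1 \<le> real T * cmod (1 - z k s k' s')" using g by (intro mult_left_mono) auto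
  qed (use assms(2) in auto)
  finally show ?thesis using assms(1) by (simp add: Hh_def)
qed

lemma Hh_bound2: assumes "0 < \<bar>sk k - sk k'\<bar>" "1 \<le> T"
  shows "cmod (Hh T k s k' s) \<le> 3 / (real T * \<bar>sk k - sk k'\<bar>)"
proof -
  have kk: "k \<noteq> k'" using assms(1) by auto
  have g: "\<bar>sk k - sk k'\<bar> / sqrt 2 \<le> cmod (1 - z k s k' s)" using gap_same by (simp add: one_minus_z)
  have gp: "0 < \<bar>sk k - sk k'\<bar> / sqrt 2" using assms(1) by simp
  then have "z k s k' s \<noteq> 1" using g by auto
  then have "cmod (G T (z k s k' s)) \<le> 2 / (real T * cmod (1 - z k s k' s))"
    using G_bound cmod_z assms(2) by blast
  also have "... \<le> 2 / (real T * (\<bar>sk k - sk k'\<bar> / sqrt 2))"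
    using g gp assms(2) by (intro divide_left_mono mult_left_mono mult_pos_pos) auto
  also have "... = (2 * sqrt 2) / (real T * \<bar>sk k - sk k'\<bar>)" by (simp add: field_simps)
  also have "... \<le> 3 / (real T * \<bar>sk k - sk k'\<bar>)"
  proof (rule divide_right_mono)
    have "sqrt 2 \<le> 3/2" by (rule real_sqrt_le_iff[THEN iffD2, of 2 "9/4", simplified real_sqrt_divide, THEN order_trans]) (auto simp: real_sqrt_divide)
    then show "2 * sqrt 2 \<le> 3" by simp
  qed (use assms in auto)
  finally show ?thesis using kk by (simp add: Hh_def)
qed

lemma norm4: "cmod (a + b + c + e) \<le> cmod a + cmod b + cmod c + cmod e"
  using norm_triangle_ineq[of "a+b+c" e] norm_triangle_ineq[of "a+b" c] norm_triangle_ineq[of a b] by linarith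

lemma Aa_norm: "cmod (Aa a T k k') \<le> 8 * (cmod (Hh T k True k' True) + cmod (Hh T k True k' False) + cmod (Hh T k False k' True) + cmod (Hh T k False k' False))"
proof -
  have e: "Aa a T k k' = Hh T k True k' True * W a k True k' True + Hh T k True k' False * W a k True k' False
      + Hh T k False k' True * W a k False k' True + Hh T k False k' False * W a k False k' False"
    by (simp add: Aa_def UNIV_bool algebra_simps)
  have t: "cmod (Hh T k s k' s' * W a k s k' s') \<le> 8 * cmod (Hh T k s k' s')" for s s'
    using mult_right_mono[OF norm_W[of a k s k' s'] norm_ge_zero[of "Hh T k s k' s'"]] by (simp add: norm_mult mult.commute)
  show ?thesis unfolding e using norm4 t[of True True] t[of True False] t[of False True] t[of False False]
    by (smt (verit) norm4)
qed

lemma md_pos: "0 < md d" if "d < n" using that by (simp add: md_def)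

lemma md_le: "real (md d) \<le> real n" if "d < n" using that npos by (auto simp: md_def min_def)

lemma Aa_bound:
  assumes k: "k < n" and d: "d < n" and T: "1 \<le> T"
  shows "cmod (Aa a T k ((k + n - d) mod n)) \<le> 32 / real T +
    (if d = 0 then 0 else 48 * (real n)^2 / (real T * (real (md d) * \<bar>real_of_int (sym (NN d k))\<bar>)))"
proof (cases "d = 0")
  case True
  then have kk: "(k + n - d) mod n = k" using k by simp
  have "Hh T k s k s = 0" for s by (simp add: Hh_def)
  then show ?thesis using Aa_norm[of a T k k] Hh_bound1[OF _ T, of True False k k] Hh_bound1[OF _ T, of False True k k]
    unfolding kk using True by simp
next
  case False
  define k' where "k' = (k + n - d) mod n"
  define D where "D = \<bar>sk k - sk k'\<bar>"
  define y where "y = \<bar>real_of_int (sym (NN d k))\<bar>"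
  have y1: "1 \<le> y" using sym_NN_ne0[of d k] by (simp add: y_def)
  have m1: "1 \<le> real (md d)" using md_pos[OF d] by simp
  have lb: "real (md d) * y / (real n)^2 \<le> D"
    using sk_diff_lb[OF k _ d] False by (simp add: D_def k'_def y_def)
  have lbp: "0 < real (md d) * y / (real n)^2" using y1 m1 npos by simp
  have Dp: "0 < D" using lb lbp by linarith
  have hs: "cmod (Hh T k s k' s) \<le> 3 / (real T * D)" for s
    using Hh_bound2[OF _ T] Dp by (simp add: D_def)
  have "3 / (real T * D) \<le> 3 / (real T * (real (md d) * y / (real n)^2))"
    using lb lbp T by (intro frac_le mult_left_mono mult_pos_pos) auto
  also have "... = 3 * (real n)^2 / (real T * (real (md d) * y))"
    using npos by (simp add: field_simps)
  finally have hs': "cmod (Hh T k s k' s) \<le> 3 * (real n)^2 / (real T * (real (md d) * y))" for s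
    using hs order_trans by blast
  define iT where "iT = 1 / real T"
  define V where "V = (real n)^2 / (real T * (real (md d) * y))"
  have h1: "cmod (Hh T k True k' False) \<le> 2 * iT" using Hh_bound1[of True False T k k'] T by (simp add: iT_def)
  have h2: "cmod (Hh T k False k' True) \<le> 2 * iT" using Hh_bound1[of False True T k k'] T by (simp add: iT_def)
  have h3: "cmod (Hh T k s k' s) \<le> 3 * V" for s using hs'[of s] by (simp add: V_def)
  have "8 * (cmod (Hh T k True k' True) + cmod (Hh T k True k' False) + cmod (Hh T k False k' True) + cmod (Hh T k False k' False))
     \<le> 8 * (3 * V + 2 * iT + 2 * iT + 3 * V)"
    by (intro mult_left_mono add_mono h1 h2 h3) auto
  then have "cmod (Aa a T k k') \<le> 8 * (3 * V + 2 * iT + 2 * iT + 3 * V)"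
    using Aa_norm[of a T k k'] by (rule_tac order_trans) auto
  also have "8 * (3 * V + 2 * iT + 2 * iT + 3 * V) = 32 * iT + 48 * V" by algebra
  also have "... = 32 / real T + 48 * (real n)^2 / (real T * (real (md d) * y))"
    by (simp add: iT_def V_def)
  finally show ?thesis using False by (simp add: k'_def y_def)
qed

lemma div3: fixes a b c e :: real shows "a / (b * (c * e)) = a / (b * c) * (1 / e)"
  by simp

lemma beta_bound:
  assumes d: "d < n" and T: "1 \<le> T"
  shows "(\<Sum>k<n. cmod (Aa a T k ((k + n - d) mod n))) \<le> 128 * (real n)^2 * (1 + ln (real n)) / (real T * real (md d))"
proof -
  define L where "L = 1 + ln (real n)"
  have L1: "1 \<le> L" using npos by (simp add: L_def)
  have Tp: "0 < real T" using T by simp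
  have mp: "0 < real (md d)" using md_pos[OF d] by simp
  have ml: "real (md d) \<le> real n" using md_le[OF d] .
  define X where "X = (real n)^2 * L / (real T * real (md d))"
  have X0: "0 \<le> X" using L1 Tp mp by (simp add: X_def)
  have nL: "real n * real (md d) \<le> (real n)^2 * L"
  proof -
    have "real n * real (md d) \<le> real n * real n" using ml by (intro mult_left_mono) auto
    also have "... \<le> (real n)^2 * L"
    proof -
      have "(real n)^2 * 1 \<le> (real n)^2 * L" by (rule mult_left_mono) (use L1 in auto)
      then show ?thesis by (simp add: power2_eq_square)
    qed
    finally show ?thesis .
  qed
  define Y where "Y = real n / real T"
  have first: "32 * Y \<le> 32 * X"
  proof -
    have "real n / real T \<le> (real n)^2 * L / (real T * real (md d))"
      using nL Tp mp by (simp add: field_simps)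
    then show ?thesis by (simp add: X_def Y_def)
  qed
  have "(\<Sum>k<n. cmod (Aa a T k ((k + n - d) mod n))) \<le> (\<Sum>k<n. 32 / real T +
    (if d = 0 then 0 else 48 * (real n)^2 / (real T * (real (md d) * \<bar>real_of_int (sym (NN d k))\<bar>))))"
    by (rule sum_mono) (rule Aa_bound[OF _ d T], simp)
  also have "... \<le> 32 * X + 96 * X"
  proof (cases "d = 0")
    case True
    have "(\<Sum>k<n. 32 / real T +
      (if d = 0 then 0 else 48 * (real n)^2 / (real T * (real (md d) * \<bar>real_of_int (sym (NN d k))\<bar>)))) = 32 * Y"
      using True by (simp add: Y_def)
    then show ?thesis using first X0 by linarith
  next
    case False
    have e3: "(\<Sum>k<n. 48 * (real n)^2 / (real T * (real (md d) * \<bar>real_of_int (sym (NN d k))\<bar>)))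
       = (48 * (real n)^2 / (real T * real (md d))) * (\<Sum>k<n. 1 / \<bar>real_of_int (sym (NN d k))\<bar>)"
      unfolding sum_distrib_left by (rule sum.cong) (simp_all add: div3)
    have "(48 * (real n)^2 / (real T * real (md d))) * (\<Sum>k<n. 1 / \<bar>real_of_int (sym (NN d k))\<bar>)
       \<le> (48 * (real n)^2 / (real T * real (md d))) * (2 * L)"
      using sum_inv_sym[of d] Tp mp by (intro mult_left_mono) (simp_all add: L_def)
    also have "... = 96 * X" by (simp add: X_def field_simps)
    finally have s2: "(\<Sum>k<n. 48 * (real n)^2 / (real T * (real (md d) * \<bar>real_of_int (sym (NN d k))\<bar>))) \<le> 96 * X"
      using e3 by simp
    have "(\<Sum>k<n. 32 / real T +
      (if d = 0 then 0 else 48 * (real n)^2 / (real T * (real (md d) * \<bar>real_of_int (sym (NN d k))\<bar>))))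
      = 32 * Y + (\<Sum>k<n. 48 * (real n)^2 / (real T * (real (md d) * \<bar>real_of_int (sym (NN d k))\<bar>)))"
      using False by (simp add: sum.distrib Y_def)
    then show ?thesis using s2 first by linarith
  qed
  also have "... = 128 * X" by simp
  also have "... = 128 * (real n)^2 * (1 + ln (real n)) / (real T * real (md d))"
    unfolding X_def L_def by simp
  finally show ?thesis .
qed

lemma inv_sq_sum: "1 \<le> N \<Longrightarrow> (\<Sum>d\<in>{1..N}. 1 / (real d)^2) \<le> 2 - 1 / real N"
proof (induction N rule: nat_induct_at_least)
  case base
  then show ?case by simp
next
  case (Suc N)
  have "(\<Sum>d\<in>{1..Suc N}. 1 / (real d)^2) = (\<Sum>d\<in>{1..N}. 1 / (real d)^2) + 1 / (real (Suc N))^2"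
    by (simp add: sum.cl_ivl_Suc)
  also have "... \<le> 2 - 1 / real N + 1 / (real (Suc N))^2" using Suc.IH by simp
  also have "... \<le> 2 - 1 / real (Suc N)"
  proof -
    have "1 / (real (Suc N))^2 \<le> 1 / (real N * real (Suc N))"
      using Suc.hyps by (intro frac_le) (auto simp: power2_eq_square)
    also have "... = 1 / real N - 1 / real (Suc N)" using Suc.hyps by (simp add: field_simps)
    finally show ?thesis by simp
  qed
  finally show ?case .
qed

lemma inv_sq_sum2: "(\<Sum>d\<in>{1..<n}. 1 / (real d)^2) \<le> 2"
proof -
  have "{1..<n} = {1..n-1}" using npos by auto
  moreover have "(\<Sum>d\<in>{1..n-1}. 1 / (real d)^2) \<le> 2 - 1 / real (n - 1)"
    using n3 by (intro inv_sq_sum) simp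
  moreover have "0 \<le> 1 / real (n - 1)" by simp
  ultimately show ?thesis by (metis (no_types, lifting) diff_ge_0_iff_ge le_diff_eq order_trans add_increasing2 le_add_same_cancel1)
qed

lemma sum_md: "(\<Sum>d<n. 1 / (real (md d))^2) \<le> 5"
proof -
  have split: "(\<Sum>d<n. 1 / (real (md d))^2) = 1 + (\<Sum>d\<in>{1..<n}. 1 / (real (md d))^2)"
  proof -
    have "(\<Sum>d<n. 1 / (real (md d))^2) = (\<Sum>d\<in>{0..<n}. 1 / (real (md d))^2)" by (simp add: atLeast0LessThan)
    also have "... = 1 / (real (md 0))^2 + (\<Sum>d\<in>{Suc 0..<n}. 1 / (real (md d))^2)"
      using npos by (simp add: sum.atLeast_Suc_lessThan)
    finally show ?thesis by (simp add: md_def)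
  qed
  have tm: "1 / (real (md d))^2 \<le> 1 / (real d)^2 + 1 / (real (n - d))^2" if "d \<in> {1..<n}" for d
  proof -
    have "md d = d \<or> md d = n - d" using that by (auto simp: md_def min_def)
    moreover have "0 \<le> 1 / (real d)^2" "0 \<le> 1 / (real (n - d))^2" by simp_all
    ultimately show ?thesis by auto
  qed
  have refl: "(\<Sum>d\<in>{1..<n}. 1 / (real (n - d))^2) = (\<Sum>d\<in>{1..<n}. 1 / (real d)^2)"
  proof (rule sum.reindex_bij_witness[where i="\<lambda>d. n - d" and j="\<lambda>d. n - d"])
    fix d assume "d \<in> {1..<n}"
    then show "n - (n - d) = d" "n - d \<in> {1..<n}" "1 / (real (n - d))^2 = 1 / (real (n - d))^2" by auto
  qed auto
  have "(\<Sum>d\<in>{1..<n}. 1 / (real (md d))^2) \<le> (\<Sum>d\<in>{1..<n}. 1 / (real d)^2 + 1 / (real (n - d))^2)"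
    by (rule sum_mono) (rule tm)
  also have "... = (\<Sum>d\<in>{1..<n}. 1 / (real d)^2) + (\<Sum>d\<in>{1..<n}. 1 / (real (n - d))^2)"
    by (rule sum.distrib)
  also have "... = 2 * (\<Sum>d\<in>{1..<n}. 1 / (real d)^2)" unfolding refl by simp
  also have "... \<le> 4" using inv_sq_sum2 by simp
  finally show ?thesis using split by simp
qed

lemma TV_bound:
  assumes T: "1 \<le> T"
  shows "(\<Sum>j<n. cmod (Ec a i T j)) \<le> 384 * real n * (1 + ln (real n)) / real T"
proof -
  define M where "M = 128 * (real n)^2 * (1 + ln (real n)) / real T"
  have M0: "0 \<le> M" using npos by (simp add: M_def)
  define \<beta> where "\<beta> d = M / real (md d)" for d
  have hb: "(\<Sum>k<n. cmod (Aa a T k ((k + n - d) mod n))) \<le> \<beta> d" if "d < n" for d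
  proof -
    have "128 * (real n)^2 * (1 + ln (real n)) / (real T * real (md d)) = \<beta> d"
      by (simp add: \<beta>_def M_def field_simps)
    then show ?thesis using beta_bound[OF that T, of a] by simp
  qed
  have P: "(\<Sum>j<n. cmod (\<Sum>k<n. \<Sum>k'<n. om ((int j - int i) * (int k - int k')) * Aa a T k k'))
          \<le> real n * sqrt (\<Sum>d<n. (\<beta> d)^2)"
    by (rule parseval_bound) (rule hb)
  have "(\<Sum>d<n. (\<beta> d)^2) = M^2 * (\<Sum>d<n. 1 / (real (md d))^2)"
    by (simp add: \<beta>_def sum_distrib_left power_divide)
  also have "... \<le> M^2 * 5" using sum_md by (intro mult_left_mono) simp_all
  finally have "sqrt (\<Sum>d<n. (\<beta> d)^2) \<le> sqrt (M^2 * 5)" by simp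
  also have "... = M * sqrt 5" using M0 by (simp add: real_sqrt_mult)
  also have "... \<le> M * 3"
  proof -
    have "sqrt 5 \<le> 3" by (rule real_le_lsqrt) auto
    then show ?thesis using M0 by (simp add: mult_left_mono)
  qed
  finally have sq: "sqrt (\<Sum>d<n. (\<beta> d)^2) \<le> 3 * M" by simp
  have ec: "cmod (Ec a i T j) = cmod (\<Sum>k<n. \<Sum>k'<n. om ((int j - int i) * (int k - int k')) * Aa a T k k') / (real n)^2" for j
    unfolding Ec_def by (simp only: norm_divide norm_power norm_of_nat)
  have "(\<Sum>j<n. cmod (Ec a i T j)) = (\<Sum>j<n. cmod (\<Sum>k<n. \<Sum>k'<n. om ((int j - int i) * (int k - int k')) * Aa a T k k')) / (real n)^2"
    unfolding ec by (rule sum_divide_distrib[symmetric])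
  also have "... \<le> (real n * (3 * M)) / (real n)^2"
    using P sq npos by (intro divide_right_mono order_trans[OF P] mult_left_mono) auto
  also have "... = 3 * M / real n"
    using npos by (simp add: power2_eq_square)
  also have "... = 384 * real n * (1 + ln (real n)) / real T"
  proof -
    have nz: "real n \<noteq> 0" using npos by simp
    have tz: "real T \<noteq> 0" using T by simp
    show ?thesis unfolding M_def using nz tz by (simp add: field_simps power2_eq_square)
  qed
  finally show ?thesis .
qed

end

context hw begin

lemma avg_close:
  assumes "i < n" "j < n" "1 \<le> T"
  shows "\<bar>avg_prob n a i T j - Re (Lc a)\<bar> \<le> 384 * real n * (1 + ln (real n)) / real T"
proof -
  have "avg_prob n a i T j = Re (Lc a) + Re (Ec a i T j)"
    using arg_cong[OF avg_exp[OF assms], of Re] by simp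
  then have "\<bar>avg_prob n a i T j - Re (Lc a)\<bar> \<le> cmod (Ec a i T j)"
    using abs_Re_le_cmod by simp
  also have "... \<le> (\<Sum>j'<n. cmod (Ec a i T j'))"
    using assms(2) by (intro member_le_sum) auto
  also have "... \<le> 384 * real n * (1 + ln (real n)) / real T" by (rule TV_bound[OF assms(3)])
  finally show ?thesis .
qed

lemma lim_dist_eq:
  assumes "i < n" "j < n"
  shows "lim_dist n a i j = Re (Lc a)"
proof -
  define K where "K = 384 * real n * (1 + ln (real n))"
  have lo: "(\<lambda>T. Re (Lc a) - K / real T) \<longlonglongrightarrow> Re (Lc a)"
    using tendsto_diff[OF tendsto_const lim_const_over_n[of K]] by simp
  have hi: "(\<lambda>T. Re (Lc a) + K / real T) \<longlonglongrightarrow> Re (Lc a)"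
    using tendsto_add[OF tendsto_const lim_const_over_n[of K]] by simp
  have ev: "eventually (\<lambda>T. 1 \<le> T) sequentially" by (rule eventually_ge_at_top)
  have cl: "\<bar>avg_prob n a i T j - Re (Lc a)\<bar> \<le> K / real T" if "1 \<le> T" for T
    unfolding K_def using avg_close[OF assms that] .
  have "(\<lambda>T. avg_prob n a i T j) \<longlonglongrightarrow> Re (Lc a)"
  proof (rule tendsto_sandwich[OF _ _ lo hi])
    show "eventually (\<lambda>T. Re (Lc a) - K / real T \<le> avg_prob n a i T j) sequentially"
      using ev
    proof (rule eventually_mono)
      fix T :: nat assume T: "1 \<le> T"
      show "Re (Lc a) - K / real T \<le> avg_prob n a i T j" using cl[OF T] unfolding abs_le_iff by linarith
    qed
    show "eventually (\<lambda>T. avg_prob n a i T j \<le> Re (Lc a) + K / real T) sequentially"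
      using ev
    proof (rule eventually_mono)
      fix T :: nat assume T: "1 \<le> T"
      show "avg_prob n a i T j \<le> Re (Lc a) + K / real T" using cl[OF T] unfolding abs_le_iff by linarith
    qed
  qed
  then show ?thesis unfolding lim_dist_def by (rule limI)
qed

lemma tv_le:
  assumes "i < n" "1 \<le> T"
  shows "tv_dist n (lim_dist n a i) (avg_prob n a i T) \<le> 384 * real n * (1 + ln (real n)) / real T"
proof -
  have "tv_dist n (lim_dist n a i) (avg_prob n a i T) = (\<Sum>j<n. \<bar>Re (Lc a) - avg_prob n a i T j\<bar>)"
    unfolding tv_dist_def using lim_dist_eq[OF assms(1)] by simp
  also have "... \<le> (\<Sum>j<n. cmod (Ec a i T j))"
  proof (rule sum_mono)
    fix j assume j: "j \<in> {..<n}"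
    then have jn: "j < n" by simp
    have "avg_prob n a i T j = Re (Lc a) + Re (Ec a i T j)"
      using arg_cong[OF avg_exp[OF assms(1) jn assms(2)], of Re] by simp
    then show "\<bar>Re (Lc a) - avg_prob n a i T j\<bar> \<le> cmod (Ec a i T j)"
      using abs_Re_le_cmod by simp
  qed
  also have "... \<le> 384 * real n * (1 + ln (real n)) / real T" by (rule TV_bound[OF assms(2)])
  finally show ?thesis .
qed

end

theorem mainTheorem7:
  shows "\<exists>C>0. \<forall>n::nat. \<forall>\<epsilon>::real. odd n \<and> n \<ge> 3 \<and> 0 < \<epsilon> \<and> \<epsilon> < 1 \<longrightarrow>
           (\<exists>T\<ge>1. mixes n \<epsilon> T) \<and>
           real (mixing_time n \<epsilon>) \<le> C * real n * (1 + ln (real n)) / \<epsilon> ^ 3"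
proof (rule exI[of _ 385], rule conjI)
  show "(0::real) < 385" by simp
  show "\<forall>n::nat. \<forall>\<epsilon>::real. odd n \<and> n \<ge> 3 \<and> 0 < \<epsilon> \<and> \<epsilon> < 1 \<longrightarrow>
           (\<exists>T\<ge>1. mixes n \<epsilon> T) \<and>
           real (mixing_time n \<epsilon>) \<le> 385 * real n * (1 + ln (real n)) / \<epsilon> ^ 3"
  proof (intro allI impI)
  fix n :: nat and \<epsilon> :: real
  assume H: "odd n \<and> n \<ge> 3 \<and> 0 < \<epsilon> \<and> \<epsilon> < 1"
  then have nodd: "odd n" and n3: "3 \<le> n" and e0: "0 < \<epsilon>" and e1: "\<epsilon> < 1" by auto
  interpret hw n using nodd n3 by unfold_locales auto
  define L where "L = 1 + ln (real n)"
  have L1: "1 \<le> L" using n3 by (simp add: L_def)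
  define K where "K = 384 * real n * L"
  have K0: "0 < K" using n3 L1 by (simp add: K_def)
  define T0 where "T0 = nat \<lceil>K / \<epsilon>\<rceil>"
  have T0ge: "K / \<epsilon> \<le> real T0" unfolding T0_def by linarith
  have T0le: "real T0 \<le> K / \<epsilon> + 1"
  proof -
    have q: "0 < K / \<epsilon>" using K0 e0 by simp
    have "0 \<le> \<lceil>K / \<epsilon>\<rceil>" using q by simp
    then have "real T0 = real_of_int \<lceil>K / \<epsilon>\<rceil>" unfolding T0_def by simp
    then show ?thesis using ceiling_correct[of "K / \<epsilon>"] by linarith
  qed
  have T01: "1 \<le> T0"
  proof -
    have "0 < K / \<epsilon>" using K0 e0 by simp
    then have "0 < real T0" using T0ge by linarith
    then show ?thesis by simp
  qed
  have mx: "mixes n \<epsilon> T0"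
    unfolding mixes_def
  proof (intro allI impI)
    fix t a i assume t: "T0 \<le> t" and i: "i < n"
    have t1: "1 \<le> t" using t T01 by simp
    have "tv_dist n (lim_dist n a i) (avg_prob n a i t) \<le> K / real t"
      using tv_le[OF i t1, of a] by (simp add: K_def L_def)
    also have "... \<le> K / real T0"
      using t T01 K0 by (intro divide_left_mono) auto
    also have "... \<le> \<epsilon>"
      using T0ge K0 e0 T01 by (simp add: divide_le_eq mult.commute pos_divide_le_eq)
    finally show "tv_dist n (lim_dist n a i) (avg_prob n a i t) \<le> \<epsilon>" .
  qed
  have A: "\<exists>T\<ge>1. mixes n \<epsilon> T" using mx T01 by blast
  have "mixing_time n \<epsilon> \<le> T0"
    unfolding mixing_time_def by (rule Least_le) (use mx T01 in auto)
  then have "real (mixing_time n \<epsilon>) \<le> K / \<epsilon> + 1" using T0le by linarith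
  also have "... \<le> 385 * real n * (1 + ln (real n)) / \<epsilon> ^ 3"
  proof -
    have e3: "\<epsilon> ^ 3 \<le> \<epsilon>"
    proof -
      have "\<epsilon> ^ 3 = \<epsilon> * \<epsilon>^2" by (simp add: power3_eq_cube power2_eq_square)
      also have "... \<le> \<epsilon> * 1" using e0 e1 by (intro mult_left_mono) (auto simp: power_le_one)
      finally show ?thesis by simp
    qed
    have e3p: "0 < \<epsilon> ^ 3" using e0 by simp
    have a: "K / \<epsilon> \<le> K / \<epsilon> ^ 3" using e3 e3p K0 by (intro divide_left_mono) auto
    have b: "1 \<le> real n * L / \<epsilon> ^ 3"
    proof -
      have "\<epsilon> ^ 3 \<le> 1" using e3 e1 by linarith
      also have "1 \<le> real n * L"
      proof -
        have "(1::real) * 1 \<le> real n * L" by (rule mult_mono) (use n3 L1 in auto)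
        then show ?thesis by simp
      qed
      finally show ?thesis using e3p by simp
    qed
    have "K / \<epsilon> + 1 \<le> K / \<epsilon> ^ 3 + real n * L / \<epsilon> ^ 3" using a b by linarith
    also have "... = 385 * real n * (1 + ln (real n)) / \<epsilon> ^ 3"
      by (simp add: K_def L_def add_divide_distrib[symmetric] algebra_simps)
    finally show ?thesis .
  qed
  finally have B: "real (mixing_time n \<epsilon>) \<le> 385 * real n * (1 + ln (real n)) / \<epsilon> ^ 3" .
  show "(\<exists>T\<ge>1. mixes n \<epsilon> T) \<and> real (mixing_time n \<epsilon>) \<le> 385 * real n * (1 + ln (real n)) / \<epsilon> ^ 3"
    using A B by blast
  qed
qed


end
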